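(* Let $\mathbf I=\langle I,\vee\rangle$ be a join-semilattice with order $\preceq$ (strict part $\prec$), let $\mathbf A_p=\langle A_p,\le_p,\cdot_p,\backslash_p,/_p,1_p\rangle$ ($p\in I$) be pairwise disjoint residuated monoids, and for $p\preceq q$ let $\varphi_{pq},\psi_{pq}:A_p\to A_q$ be monotone maps such that: $\varphi_{pp}=\psi_{pp}=\mathrm{id}_{A_p}$; $\varphi_{qr}\varphi_{pq}=\varphi_{pr}$ and $\psi_{qr}\psi_{pq}=\psi_{pr}$ for $p\preceq q\preceq r$; and for all $a,b\in A_p$: $\varphi_{pq}(1_p)=1_q$, $\varphi_{pq}(a\cdot_pb)=\varphi_{pq}(a)\cdot_q\varphi_{pq}(b)$, $\psi_{pq}(a\backslash_pb)=\varphi_{pq}(a)\backslash_q\psi_{pq}(b)$, $\psi_{pq}(a/_pb)=\psi_{pq}(a)/_q\varphi_{pq}(b)$. Assume (S1): if $p\prec q$, $p\prec r$, $t=q\vee r$, then $\varphi_{qt}(\psi_{pq}(a))\le_t\psi_{rt}(\varphi_{pr}(a))$ for all $a\in A_p$; and (S2): if $p\prec q$, $a,b\in A_p$ and $\varphi_{pq}(a)\le_q\psi_{pq}(b)$, then $a<_pb$. Define $\mathbf A$ on $A:=\biguplus_pA_p$ by, for $a\in A_p$, $b\in A_q$, $r:=p\vee q$: $ab:=\varphi_{pr}(a)\cdot_r\varphi_{qr}(b)$, $a\backslash b:=\varphi_{pr}(a)\backslash_r\psi_{qr}(b)$, $a/b:=\psi_{pr}(a)/_r\varphi_{qr}(b)$,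 and $a\le b\iff\varphi_{pr}(a)\le_r\psi_{qr}(b)$. Then: (1) $\mathbf A=\langle A,\le,\cdot,\backslash,/\rangle$ is a residuated semigroup; if $\mathbf I$ has a least element $\bot$, then $1_\bot$ is a global identity of $\mathbf A$; (2) $I':=\{1_p: p\in I\}$ consists of central positive idempotents of $\mathbf A$, $1_p1_q=1_{p\vee q}$, so $I'$ is closed under multiplication and $p\mapsto1_p$ is an isomorphism $\mathbf I\cong\langle I',\cdot\rangle$; (3) $\mathbf A$ is steady over $\langle I',\cdot\rangle$, with $u_a=1_p$ for $a\in A_p$; (4) if every $\mathbf A_p$ is balanced, then $\mathbf A$ is balanced; (5) if every $\mathbf A_p$ is integrally closed, then $I'$ is exactly the set of central positive idempotents of $\mathbf A$; (6) if every $\mathbf A_p$ is integral, then $\mathbf A$ satisfies $xx\le x$.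
   Context: A residuated semigroup is a structure $\langle A,\le,\cdot,\backslash,/\rangle$ where $\langle A,\le\rangle$ is a poset, $\langle A,\cdot\rangle$ is a semigroup, and $xy\le z\iff x\le z/y\iff y\le x\backslash z$; a residuated monoid additionally has a global identity $1$. An element $p$ is positive if $a\le pa$ and $a\le ap$ for all $a$, idempotent if $pp=p$, central if $pa=ap$ for all $a$. For a nonempty set $I'$ of central positive idempotents closed under multiplication, $\mathbf A$ is balanced over $\langle I',\cdot\rangle$ if for every $a$ the element $u_a:=\max\{p\in I': pa=a\}$ exists, and steady over it if moreover $u_{ab}=u_{a/b}=u_{b\backslash a}=u_au_b$ for all $a,b$. A residuated semigroup is balanced if it satisfies $x\backslash x=x/x$ and all elements $a\backslash a$, $a/a$ are positive. A residuated monoid is integrally closed if $x\backslash x=1$ for all $x$, and integral if $x\le1$ for all $x$. *)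

theory Defs
  imports Main
begin

definition residuated_semigroup ::
  "'a set \<Rightarrow> ('a \<Rightarrow> 'a \<Rightarrow> bool) \<Rightarrow> ('a \<Rightarrow> 'a \<Rightarrow> 'a) \<Rightarrow> ('a \<Rightarrow> 'a \<Rightarrow> 'a) \<Rightarrow> ('a \<Rightarrow> 'a \<Rightarrow> 'a) \<Rightarrow> bool" where
  "residuated_semigroup A le mul ld rd \<longleftrightarrow>
     (\<forall>x\<in>A. le x x) \<and>
     (\<forall>x\<in>A. \<forall>y\<in>A. le x y \<and> le y x \<longrightarrow> x = y) \<and>
     (\<forall>x\<in>A. \<forall>y\<in>A. \<forall>z\<in>A. le x y \<and> le y z \<longrightarrow> le x z) \<and>
     (\<forall>x\<in>A. \<forall>y\<in>A. mul x y \<in> A \<and> ld x y \<in> A \<and> rd x y \<in> A) \<and>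
     (\<forall>x\<in>A. \<forall>y\<in>A. \<forall>z\<in>A. mul (mul x y) z = mul x (mul y z)) \<and>
     (\<forall>x\<in>A. \<forall>y\<in>A. \<forall>z\<in>A.
        (le (mul x y) z \<longleftrightarrow> le x (rd z y)) \<and> (le (mul x y) z \<longleftrightarrow> le y (ld x z)))"

definition global_identity :: "'a set \<Rightarrow> ('a \<Rightarrow> 'a \<Rightarrow> 'a) \<Rightarrow> 'a \<Rightarrow> bool" where
  "global_identity A mul e \<longleftrightarrow> e \<in> A \<and> (\<forall>x\<in>A. mul e x = x \<and> mul x e = x)"

definition residuated_monoid ::
  "'a set \<Rightarrow> ('a \<Rightarrow> 'a \<Rightarrow> bool) \<Rightarrow> ('a \<Rightarrow> 'a \<Rightarrow> 'a) \<Rightarrow> ('a \<Rightarrow> 'a \<Rightarrow> 'a) \<Rightarrow> ('a \<Rightarrow> 'a \<Rightarrow> 'a) \<Rightarrow> 'a \<Rightarrow> bool" where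
  "residuated_monoid A le mul ld rd e \<longleftrightarrow>
     residuated_semigroup A le mul ld rd \<and> global_identity A mul e"

definition positive_el :: "'a set \<Rightarrow> ('a \<Rightarrow> 'a \<Rightarrow> bool) \<Rightarrow> ('a \<Rightarrow> 'a \<Rightarrow> 'a) \<Rightarrow> 'a \<Rightarrow> bool" where
  "positive_el A le mul p \<longleftrightarrow> (\<forall>a\<in>A. le a (mul p a) \<and> le a (mul a p))"

definition idempotent_el :: "('a \<Rightarrow> 'a \<Rightarrow> 'a) \<Rightarrow> 'a \<Rightarrow> bool" where
  "idempotent_el mul p \<longleftrightarrow> mul p p = p"

definition central_el :: "'a set \<Rightarrow> ('a \<Rightarrow> 'a \<Rightarrow> 'a) \<Rightarrow> 'a \<Rightarrow> bool" where
  "central_el A mul p \<longleftrightarrow> (\<forall>a\<in>A. mul p a = mul a p)"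

definition cpi_el :: "'a set \<Rightarrow> ('a \<Rightarrow> 'a \<Rightarrow> bool) \<Rightarrow> ('a \<Rightarrow> 'a \<Rightarrow> 'a) \<Rightarrow> 'a \<Rightarrow> bool" where
  "cpi_el A le mul p \<longleftrightarrow> p \<in> A \<and> central_el A mul p \<and> positive_el A le mul p \<and> idempotent_el mul p"

definition cpi_set :: "'a set \<Rightarrow> ('a \<Rightarrow> 'a \<Rightarrow> bool) \<Rightarrow> ('a \<Rightarrow> 'a \<Rightarrow> 'a) \<Rightarrow> 'a set \<Rightarrow> bool" where
  "cpi_set A le mul I' \<longleftrightarrow> I' \<noteq> {} \<and> (\<forall>p\<in>I'. cpi_el A le mul p) \<and>
     (\<forall>p\<in>I'. \<forall>q\<in>I'. mul p q \<in> I')"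

definition is_u :: "('a \<Rightarrow> 'a \<Rightarrow> bool) \<Rightarrow> ('a \<Rightarrow> 'a \<Rightarrow> 'a) \<Rightarrow> 'a set \<Rightarrow> 'a \<Rightarrow> 'a \<Rightarrow> bool" where
  "is_u le mul I' a p \<longleftrightarrow> p \<in> I' \<and> mul p a = a \<and> (\<forall>q\<in>I'. mul q a = a \<longrightarrow> le q p)"

definition u_el :: "('a \<Rightarrow> 'a \<Rightarrow> bool) \<Rightarrow> ('a \<Rightarrow> 'a \<Rightarrow> 'a) \<Rightarrow> 'a set \<Rightarrow> 'a \<Rightarrow> 'a" where
  "u_el le mul I' a = (THE p. is_u le mul I' a p)"

definition balanced_over :: "'a set \<Rightarrow> ('a \<Rightarrow> 'a \<Rightarrow> bool) \<Rightarrow> ('a \<Rightarrow> 'a \<Rightarrow> 'a) \<Rightarrow> 'a set \<Rightarrow> bool" where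
  "balanced_over A le mul I' \<longleftrightarrow> cpi_set A le mul I' \<and> (\<forall>a\<in>A. \<exists>p. is_u le mul I' a p)"

definition steady_over ::
  "'a set \<Rightarrow> ('a \<Rightarrow> 'a \<Rightarrow> bool) \<Rightarrow> ('a \<Rightarrow> 'a \<Rightarrow> 'a) \<Rightarrow> ('a \<Rightarrow> 'a \<Rightarrow> 'a) \<Rightarrow> ('a \<Rightarrow> 'a \<Rightarrow> 'a) \<Rightarrow> 'a set \<Rightarrow> bool" where
  "steady_over A le mul ld rd I' \<longleftrightarrow> balanced_over A le mul I' \<and>
     (\<forall>a\<in>A. \<forall>b\<in>A.
        u_el le mul I' (mul a b) = mul (u_el le mul I' a) (u_el le mul I' b) \<and>
        u_el le mul I' (rd a b) = mul (u_el le mul I' a) (u_el le mul I' b) \<and>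
        u_el le mul I' (ld b a) = mul (u_el le mul I' a) (u_el le mul I' b))"

definition balanced_rs ::
  "'a set \<Rightarrow> ('a \<Rightarrow> 'a \<Rightarrow> bool) \<Rightarrow> ('a \<Rightarrow> 'a \<Rightarrow> 'a) \<Rightarrow> ('a \<Rightarrow> 'a \<Rightarrow> 'a) \<Rightarrow> ('a \<Rightarrow> 'a \<Rightarrow> 'a) \<Rightarrow> bool" where
  "balanced_rs A le mul ld rd \<longleftrightarrow>
     (\<forall>x\<in>A. ld x x = rd x x \<and> positive_el A le mul (ld x x) \<and> positive_el A le mul (rd x x))"

definition integrally_closed :: "'a set \<Rightarrow> ('a \<Rightarrow> 'a \<Rightarrow> 'a) \<Rightarrow> 'a \<Rightarrow> bool" where
  "integrally_closed A ld e \<longleftrightarrow> (\<forall>x\<in>A. ld x x = e)"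

definition integral :: "'a set \<Rightarrow> ('a \<Rightarrow> 'a \<Rightarrow> bool) \<Rightarrow> 'a \<Rightarrow> bool" where
  "integral A le e \<longleftrightarrow> (\<forall>x\<in>A. le x e)"

section \<open>The construction on the disjoint union (tagged pairs (p,a) with a in A_p)\<close>

definition sum_mul ::
  "('i::semilattice_sup \<Rightarrow> 'i \<Rightarrow> 'a \<Rightarrow> 'a) \<Rightarrow> ('i \<Rightarrow> 'a \<Rightarrow> 'a \<Rightarrow> 'a) \<Rightarrow> 'i \<times> 'a \<Rightarrow> 'i \<times> 'a \<Rightarrow> 'i \<times> 'a" where
  "sum_mul phi mul x y = (let r = sup (fst x) (fst y) in
     (r, mul r (phi (fst x) r (snd x)) (phi (fst y) r (snd y))))"

definition sum_ld ::
  "('i::semilattice_sup \<Rightarrow> 'i \<Rightarrow> 'a \<Rightarrow> 'a) \<Rightarrow> ('i \<Rightarrow> 'i \<Rightarrow> 'a \<Rightarrow> 'a) \<Rightarrow> ('i \<Rightarrow> 'a \<Rightarrow> 'a \<Rightarrow> 'a) \<Rightarrow> 'i \<times> 'a \<Rightarrow> 'i \<times> 'a \<Rightarrow> 'i \<times> 'a" where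
  "sum_ld phi psi ld x y = (let r = sup (fst x) (fst y) in
     (r, ld r (phi (fst x) r (snd x)) (psi (fst y) r (snd y))))"

definition sum_rd ::
  "('i::semilattice_sup \<Rightarrow> 'i \<Rightarrow> 'a \<Rightarrow> 'a) \<Rightarrow> ('i \<Rightarrow> 'i \<Rightarrow> 'a \<Rightarrow> 'a) \<Rightarrow> ('i \<Rightarrow> 'a \<Rightarrow> 'a \<Rightarrow> 'a) \<Rightarrow> 'i \<times> 'a \<Rightarrow> 'i \<times> 'a \<Rightarrow> 'i \<times> 'a" where
  "sum_rd phi psi rd x y = (let r = sup (fst x) (fst y) in
     (r, rd r (psi (fst x) r (snd x)) (phi (fst y) r (snd y))))"

definition sum_le ::
  "('i::semilattice_sup \<Rightarrow> 'i \<Rightarrow> 'a \<Rightarrow> 'a) \<Rightarrow> ('i \<Rightarrow> 'i \<Rightarrow> 'a \<Rightarrow> 'a) \<Rightarrow> ('i \<Rightarrow> 'a \<Rightarrow> 'a \<Rightarrow> bool) \<Rightarrow> 'i \<times> 'a \<Rightarrow> 'i \<times> 'a \<Rightarrow> bool" where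
  "sum_le phi psi le x y = (let r = sup (fst x) (fst y) in
     le r (phi (fst x) r (snd x)) (psi (fst y) r (snd y)))"

end

theory Submission
  imports Defs
begin

locale ctx =
  fixes car :: "'i::semilattice_sup \<Rightarrow> 'a set"
    and le :: "'i \<Rightarrow> 'a \<Rightarrow> 'a \<Rightarrow> bool"
    and mul ld rd :: "'i \<Rightarrow> 'a \<Rightarrow> 'a \<Rightarrow> 'a"
    and one :: "'i \<Rightarrow> 'a"
    and phi psi :: "'i \<Rightarrow> 'i \<Rightarrow> 'a \<Rightarrow> 'a"
  assumes rm: "\<And>p. residuated_monoid (car p) (le p) (mul p) (ld p) (rd p) (one p)"
    and phi_into: "\<And>p q a. p \<le> q \<Longrightarrow> a \<in> car p \<Longrightarrow> phi p q a \<in> car q"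
    and psi_into: "\<And>p q a. p \<le> q \<Longrightarrow> a \<in> car p \<Longrightarrow> psi p q a \<in> car q"
    and phi_mono: "\<And>p q a b. p \<le> q \<Longrightarrow> a \<in> car p \<Longrightarrow> b \<in> car p \<Longrightarrow> le p a b \<Longrightarrow>
                     le q (phi p q a) (phi p q b)"
    and psi_mono: "\<And>p q a b. p \<le> q \<Longrightarrow> a \<in> car p \<Longrightarrow> b \<in> car p \<Longrightarrow> le p a b \<Longrightarrow>
                     le q (psi p q a) (psi p q b)"
    and phi_id: "\<And>p a. a \<in> car p \<Longrightarrow> phi p p a = a"
    and psi_id: "\<And>p a. a \<in> car p \<Longrightarrow> psi p p a = a"
    and phi_comp: "\<And>p q r a. p \<le> q \<Longrightarrow> q \<le> r \<Longrightarrow> a \<in> car p \<Longrightarrow>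
                     phi q r (phi p q a) = phi p r a"
    and psi_comp: "\<And>p q r a. p \<le> q \<Longrightarrow> q \<le> r \<Longrightarrow> a \<in> car p \<Longrightarrow>
                     psi q r (psi p q a) = psi p r a"
    and phi_one: "\<And>p q. p \<le> q \<Longrightarrow> phi p q (one p) = one q"
    and phi_mul: "\<And>p q a b. p \<le> q \<Longrightarrow> a \<in> car p \<Longrightarrow> b \<in> car p \<Longrightarrow>
                     phi p q (mul p a b) = mul q (phi p q a) (phi p q b)"
    and psi_ld: "\<And>p q a b. p \<le> q \<Longrightarrow> a \<in> car p \<Longrightarrow> b \<in> car p \<Longrightarrow>
                     psi p q (ld p a b) = ld q (phi p q a) (psi p q b)"
    and psi_rd: "\<And>p q a b. p \<le> q \<Longrightarrow> a \<in> car p \<Longrightarrow> b \<in> car p \<Longrightarrow>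
                     psi p q (rd p a b) = rd q (psi p q a) (phi p q b)"
    and S1: "\<And>p q r t a. p < q \<Longrightarrow> p < r \<Longrightarrow> t = sup q r \<Longrightarrow> a \<in> car p \<Longrightarrow>
                     le t (phi q t (psi p q a)) (psi r t (phi p r a))"
    and S2: "\<And>p q a b. p < q \<Longrightarrow> a \<in> car p \<Longrightarrow> b \<in> car p \<Longrightarrow>
                     le q (phi p q a) (psi p q b) \<Longrightarrow> le p a b \<and> a \<noteq> b"
begin

lemma rs: "residuated_semigroup (car p) (le p) (mul p) (ld p) (rd p)"
  using rm[of p] unfolding residuated_monoid_def by (elim conjE)
lemma gi: "global_identity (car p) (mul p) (one p)"
  using rm[of p] unfolding residuated_monoid_def by (elim conjE)

lemma rsD1: "\<forall>x\<in>car p. le p x x"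
  using rs[of p] unfolding residuated_semigroup_def by (elim conjE)
lemma rsD2: "\<forall>x\<in>car p. \<forall>y\<in>car p. le p x y \<and> le p y x \<longrightarrow> x = y"
  using rs[of p] unfolding residuated_semigroup_def by (elim conjE)
lemma rsD3: "\<forall>x\<in>car p. \<forall>y\<in>car p. \<forall>z\<in>car p. le p x y \<and> le p y z \<longrightarrow> le p x z"
  using rs[of p] unfolding residuated_semigroup_def by (elim conjE)
lemma rsD4: "\<forall>x\<in>car p. \<forall>y\<in>car p. mul p x y \<in> car p \<and> ld p x y \<in> car p \<and> rd p x y \<in> car p"
  using rs[of p] unfolding residuated_semigroup_def by (elim conjE)
lemma rsD5: "\<forall>x\<in>car p. \<forall>y\<in>car p. \<forall>z\<in>car p. mul p (mul p x y) z = mul p x (mul p y z)"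
  using rs[of p] unfolding residuated_semigroup_def by (elim conjE)
lemma rsD6: "\<forall>x\<in>car p. \<forall>y\<in>car p. \<forall>z\<in>car p. (le p (mul p x y) z \<longleftrightarrow> le p x (rd p z y)) \<and> (le p (mul p x y) z \<longleftrightarrow> le p y (ld p x z))"
  using rs[of p] unfolding residuated_semigroup_def by (elim conjE)

lemma refl': "a \<in> car p \<Longrightarrow> le p a a"
  using rsD1 by blast
lemma antisym': "a \<in> car p \<Longrightarrow> b \<in> car p \<Longrightarrow> le p a b \<Longrightarrow> le p b a \<Longrightarrow> a = b"
  using rsD2[of p] by blast
lemma trans': "a \<in> car p \<Longrightarrow> b \<in> car p \<Longrightarrow> c \<in> car p \<Longrightarrow> le p a b \<Longrightarrow> le p b c \<Longrightarrow> le p a c"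
  using rsD3[of p] by blast
lemma mul_in: "a \<in> car p \<Longrightarrow> b \<in> car p \<Longrightarrow> mul p a b \<in> car p"
  and ld_in: "a \<in> car p \<Longrightarrow> b \<in> car p \<Longrightarrow> ld p a b \<in> car p"
  and rd_in: "a \<in> car p \<Longrightarrow> b \<in> car p \<Longrightarrow> rd p a b \<in> car p"
  using rsD4[of p] by blast+
lemma assoc': "a \<in> car p \<Longrightarrow> b \<in> car p \<Longrightarrow> c \<in> car p \<Longrightarrow> mul p (mul p a b) c = mul p a (mul p b c)"
  using rsD5[of p] by blast
lemma res_r: "a \<in> car p \<Longrightarrow> b \<in> car p \<Longrightarrow> c \<in> car p \<Longrightarrow> le p (mul p a b) c \<longleftrightarrow> le p a (rd p c b)"
  using rsD6[of p] by blast
lemma res_l: "a \<in> car p \<Longrightarrow> b \<in> car p \<Longrightarrow> c \<in> car p \<Longrightarrow> le p (mul p a b) c \<longleftrightarrow> le p b (ld p a c)"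
  using rsD6[of p] by blast
lemma one_in: "one p \<in> car p" and one_l: "a \<in> car p \<Longrightarrow> mul p (one p) a = a"
  and one_r: "a \<in> car p \<Longrightarrow> mul p a (one p) = a"
  using gi[of p] unfolding global_identity_def by auto

lemma mono_l: "x \<in> car p \<Longrightarrow> y \<in> car p \<Longrightarrow> z \<in> car p \<Longrightarrow> le p x y \<Longrightarrow> le p (mul p x z) (mul p y z)"
proof -
  assume h: "x \<in> car p" "y \<in> car p" "z \<in> car p" "le p x y"
  have "le p y (rd p (mul p y z) z)" using res_r[of y p z "mul p y z"] h by (simp add: mul_in refl')
  then have "le p x (rd p (mul p y z) z)" using h trans' by (meson mul_in rd_in)
  then show ?thesis using res_r h by (simp add: mul_in)
qed

lemma mono_r: "x \<in> car p \<Longrightarrow> y \<in> car p \<Longrightarrow> z \<in> car p \<Longrightarrow> le p x y \<Longrightarrow> le p (mul p z x) (mul p z y)"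
proof -
  assume h: "x \<in> car p" "y \<in> car p" "z \<in> car p" "le p x y"
  have "le p y (ld p z (mul p z y))" using res_l[of z p y "mul p z y"] h by (simp add: mul_in refl')
  then have "le p x (ld p z (mul p z y))" using h trans' by (meson mul_in ld_in)
  then show ?thesis using res_l h by (simp add: mul_in)
qed

lemma F1: "p \<le> q \<Longrightarrow> a \<in> car p \<Longrightarrow> le q (psi p q a) (phi p q a)"
proof (cases "p = q")
  case True
  assume "a \<in> car p" then show ?thesis using True by (simp add: phi_id psi_id refl')
next
  case False
  assume "p \<le> q" "a \<in> car p"
  then have "p < q" using False by simp
  from S1[OF this this _ \<open>a \<in> car p\<close>] show ?thesis
    using \<open>p \<le> q\<close> \<open>a \<in> car p\<close> by (simp add: phi_id psi_id phi_into psi_into)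
qed

lemma GS1: assumes "q \<le> r1" "q \<le> r2" "b \<in> car q"
  shows "le (sup r1 r2) (phi r1 (sup r1 r2) (psi q r1 b)) (psi r2 (sup r1 r2) (phi q r2 b))"
proof (cases "q = r1")
  case True
  then have "sup r1 r2 = r2" using assms by (simp add: sup_absorb2)
  then show ?thesis using True assms by (simp add: phi_id psi_id phi_into refl')
next
  case False
  show ?thesis
  proof (cases "q = r2")
    case True
    then have "sup r1 r2 = r1" using assms by (simp add: sup_absorb1)
    then show ?thesis using True assms by (simp add: phi_id psi_id psi_into refl')
  next
    case False2: False
    show ?thesis using S1[of q r1 r2 "sup r1 r2" b] assms False False2 by simp
  qed
qed

lemma D: "r \<le> t \<Longrightarrow> x \<in> car r \<Longrightarrow> y \<in> car r \<Longrightarrow> le t (phi r t x) (psi r t y) \<Longrightarrow> le r x y"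
proof (cases "r = t")
  case True
  assume "x \<in> car r" "y \<in> car r" "le t (phi r t x) (psi r t y)"
  then show ?thesis using True by (simp add: phi_id psi_id)
next
  case False
  assume "r \<le> t" "x \<in> car r" "y \<in> car r" "le t (phi r t x) (psi r t y)"
  then show ?thesis using False S2[of r t x y] by simp
qed

lemma M_simp: "sum_mul phi mul (p, a) (q, b) = (sup p q, mul (sup p q) (phi p (sup p q) a) (phi q (sup p q) b))"
  by (simp add: sum_mul_def Let_def)
lemma LD_simp: "sum_ld phi psi ld (p, a) (q, b) = (sup p q, ld (sup p q) (phi p (sup p q) a) (psi q (sup p q) b))"
  by (simp add: sum_ld_def Let_def)
lemma RD_simp: "sum_rd phi psi rd (p, a) (q, b) = (sup p q, rd (sup p q) (psi p (sup p q) a) (phi q (sup p q) b))"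
  by (simp add: sum_rd_def Let_def)
lemma LE_simp: "sum_le phi psi le (p, a) (q, b) = le (sup p q) (phi p (sup p q) a) (psi q (sup p q) b)"
  by (simp add: sum_le_def Let_def)


lemma LE_antisym:
  assumes a: "a \<in> car p" and b: "b \<in> car q"
    and h1: "sum_le phi psi le (p, a) (q, b)" and h2: "sum_le phi psi le (q, b) (p, a)"
  shows "(p, a) = (q, b)"
proof -
  define r where "r = sup p q"
  have pr: "p \<le> r" and qr: "q \<le> r" by (simp_all add: r_def)
  have h1': "le r (phi p r a) (psi q r b)" using h1 by (simp add: LE_simp r_def)
  have h2': "le r (phi q r b) (psi p r a)" using h2 by (simp add: LE_simp r_def sup_commute)
  have inr: "phi p r a \<in> car r" "psi p r a \<in> car r" "phi q r b \<in> car r" "psi q r b \<in> car r"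
    using a b pr qr by (simp_all add: phi_into psi_into)
  have "p = r"
  proof (rule ccontr)
    assume ne: "p \<noteq> r"
    have "le r (psi q r b) (phi q r b)" using F1[OF qr b] .
    then have "le r (phi p r a) (phi q r b)" using h1' inr trans' by blast
    then have "le r (phi p r a) (psi p r a)" using h2' inr trans' by blast
    then show False using S2[of p r a a] ne pr a by (auto simp: less_le)
  qed
  moreover have "q = r"
  proof (rule ccontr)
    assume ne: "q \<noteq> r"
    have "le r (psi p r a) (phi p r a)" using F1[OF pr a] .
    then have "le r (phi q r b) (phi p r a)" using h2' inr trans' by blast
    then have "le r (phi q r b) (psi q r b)" using h1' inr trans' by blast
    then show False using S2[of q r b b] ne qr b by (auto simp: less_le)
  qed
  ultimately show ?thesis using h1' h2' a b antisym' by (simp add: phi_id psi_id)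
qed

lemma LE_trans:
  assumes a: "a \<in> car p" and b: "b \<in> car q" and c: "c \<in> car s"
    and h1: "sum_le phi psi le (p, a) (q, b)" and h2: "sum_le phi psi le (q, b) (s, c)"
  shows "sum_le phi psi le (p, a) (s, c)"
proof -
  define r1 where "r1 = sup p q"
  define r2 where "r2 = sup q s"
  define r3 where "r3 = sup p s"
  define t where "t = sup r1 r2"
  have o: "p \<le> r1" "q \<le> r1" "q \<le> r2" "s \<le> r2" "p \<le> r3" "s \<le> r3" "r1 \<le> t" "r2 \<le> t" "r3 \<le> t"
    "p \<le> t" "q \<le> t" "s \<le> t"
    unfolding r1_def r2_def r3_def t_def by (auto intro: le_supI1 le_supI2)
  have h1': "le r1 (phi p r1 a) (psi q r1 b)" using h1 by (simp add: LE_simp r1_def)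
  have h2': "le r2 (phi q r2 b) (psi s r2 c)" using h2 by (simp add: LE_simp r2_def)
  have i1: "le t (phi p t a) (phi r1 t (psi q r1 b))"
    using phi_mono[OF o(7) _ _ h1'] o a b phi_into psi_into phi_comp by metis
  have i2: "le t (phi r1 t (psi q r1 b)) (psi r2 t (phi q r2 b))"
    using GS1[OF o(2) o(3) b] by (simp add: t_def)
  have i3: "le t (psi r2 t (phi q r2 b)) (psi s t c)"
    using psi_mono[OF o(8) _ _ h2'] o b c phi_into psi_into psi_comp by metis
  have m: "phi p t a \<in> car t" "phi r1 t (psi q r1 b) \<in> car t" "psi r2 t (phi q r2 b) \<in> car t"
     "psi s t c \<in> car t"
    using o a b c by (simp_all add: phi_into psi_into)
  have "le t (phi p t a) (psi s t c)" using i1 i2 i3 m trans' by metis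
  then have "le t (phi r3 t (phi p r3 a)) (psi r3 t (psi s r3 c))"
    using o a c by (simp add: phi_comp psi_comp)
  then have "le r3 (phi p r3 a) (psi s r3 c)"
    using D[OF o(9)] o a c by (simp add: phi_into psi_into)
  then show ?thesis by (simp add: LE_simp r3_def)
qed

lemma M_assoc:
  assumes a: "a \<in> car p" and b: "b \<in> car q" and c: "c \<in> car s"
  shows "sum_mul phi mul (sum_mul phi mul (p, a) (q, b)) (s, c) = sum_mul phi mul (p, a) (sum_mul phi mul (q, b) (s, c))"
proof -
  define t where "t = sup (sup p q) s"
  have e: "sup p (sup q s) = t" by (simp add: t_def sup_assoc)
  have o: "p \<le> sup p q" "q \<le> sup p q" "sup p q \<le> t" "q \<le> sup q s" "s \<le> sup q s" "sup q s \<le> t"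
    "p \<le> t" "q \<le> t" "s \<le> t"
    unfolding t_def by (auto intro: le_supI1 le_supI2)
  have L: "sum_mul phi mul (sum_mul phi mul (p, a) (q, b)) (s, c) =
     (t, mul t (mul t (phi p t a) (phi q t b)) (phi s t c))"
    using o a b c by (simp add: M_simp t_def[symmetric] phi_mul phi_into phi_comp)
  have R: "sum_mul phi mul (p, a) (sum_mul phi mul (q, b) (s, c)) =
     (t, mul t (phi p t a) (mul t (phi q t b) (phi s t c)))"
    using o a b c by (simp add: M_simp e phi_mul phi_into phi_comp)
  show ?thesis unfolding L R using o a b c by (simp add: assoc' phi_into)
qed

lemma residuation:
  assumes a: "a \<in> car p" and b: "b \<in> car q" and c: "c \<in> car s"
  shows "sum_le phi psi le (sum_mul phi mul (p, a) (q, b)) (s, c) \<longleftrightarrow>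
           sum_le phi psi le (p, a) (sum_rd phi psi rd (s, c) (q, b))"
    and "sum_le phi psi le (sum_mul phi mul (p, a) (q, b)) (s, c) \<longleftrightarrow>
           sum_le phi psi le (q, b) (sum_ld phi psi ld (p, a) (s, c))"
proof -
  define t where "t = sup (sup p q) s"
  have e1: "sup p (sup s q) = t" by (simp add: t_def sup_aci)
  have e2: "sup q (sup p s) = t" by (simp add: t_def sup_aci)
  have o: "p \<le> sup p q" "q \<le> sup p q" "sup p q \<le> t" "q \<le> sup s q" "s \<le> sup s q" "sup s q \<le> t"
    "p \<le> sup p s" "s \<le> sup p s" "sup p s \<le> t"
    "p \<le> t" "q \<le> t" "s \<le> t"
    unfolding t_def by (auto intro: le_supI1 le_supI2)
  have L: "sum_le phi psi le (sum_mul phi mul (p, a) (q, b)) (s, c) \<longleftrightarrow>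
      le t (mul t (phi p t a) (phi q t b)) (psi s t c)"
    using o a b c by (simp add: M_simp LE_simp t_def[symmetric] phi_mul phi_into phi_comp)
  have R1: "sum_le phi psi le (p, a) (sum_rd phi psi rd (s, c) (q, b)) \<longleftrightarrow>
      le t (phi p t a) (rd t (psi s t c) (phi q t b))"
    using o a b c by (simp add: RD_simp LE_simp e1 psi_rd phi_into psi_into phi_comp psi_comp)
  have R2: "sum_le phi psi le (q, b) (sum_ld phi psi ld (p, a) (s, c)) \<longleftrightarrow>
      le t (phi q t b) (ld t (phi p t a) (psi s t c))"
    using o a b c by (simp add: LD_simp LE_simp e2 psi_ld phi_into psi_into phi_comp psi_comp)
  show "sum_le phi psi le (sum_mul phi mul (p, a) (q, b)) (s, c) \<longleftrightarrow>
           sum_le phi psi le (p, a) (sum_rd phi psi rd (s, c) (q, b))"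
    unfolding L R1 using o a b c by (simp add: res_r phi_into psi_into)
  show "sum_le phi psi le (sum_mul phi mul (p, a) (q, b)) (s, c) \<longleftrightarrow>
           sum_le phi psi le (q, b) (sum_ld phi psi ld (p, a) (s, c))"
    unfolding L R2 using o a b c by (simp add: res_l phi_into psi_into)
qed

lemma RS: "residuated_semigroup (Sigma UNIV car) (sum_le phi psi le) (sum_mul phi mul)
   (sum_ld phi psi ld) (sum_rd phi psi rd)"
  unfolding residuated_semigroup_def
proof (intro conjI ballI impI)
  fix x assume "x \<in> Sigma UNIV car"
  then show "sum_le phi psi le x x" by (auto simp: LE_simp phi_id psi_id refl')
next
  fix x y assume "x \<in> Sigma UNIV car" "y \<in> Sigma UNIV car"
    "sum_le phi psi le x y \<and> sum_le phi psi le y x"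
  then show "x = y" using LE_antisym by auto
next
  fix x y z assume "x \<in> Sigma UNIV car" "y \<in> Sigma UNIV car" "z \<in> Sigma UNIV car"
    "sum_le phi psi le x y \<and> sum_le phi psi le y z"
  then show "sum_le phi psi le x z" using LE_trans by (cases x; cases y; cases z) blast
next
  fix x y assume "x \<in> Sigma UNIV car" "y \<in> Sigma UNIV car"
  then show "sum_mul phi mul x y \<in> Sigma UNIV car"
    by (cases x; cases y) (simp add: M_simp mul_in phi_into)
next
  fix x y assume "x \<in> Sigma UNIV car" "y \<in> Sigma UNIV car"
  then show "sum_ld phi psi ld x y \<in> Sigma UNIV car"
    by (cases x; cases y) (simp add: LD_simp ld_in phi_into psi_into)
next
  fix x y assume "x \<in> Sigma UNIV car" "y \<in> Sigma UNIV car"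
  then show "sum_rd phi psi rd x y \<in> Sigma UNIV car"
    by (cases x; cases y) (simp add: RD_simp rd_in phi_into psi_into)
next
  fix x y z assume "x \<in> Sigma UNIV car" "y \<in> Sigma UNIV car" "z \<in> Sigma UNIV car"
  then show "sum_mul phi mul (sum_mul phi mul x y) z = sum_mul phi mul x (sum_mul phi mul y z)"
    using M_assoc by (cases x; cases y; cases z) auto
next
  fix x y z assume "x \<in> Sigma UNIV car" "y \<in> Sigma UNIV car" "z \<in> Sigma UNIV car"
  then show "sum_le phi psi le (sum_mul phi mul x y) z = sum_le phi psi le x (sum_rd phi psi rd z y)"
    using residuation(1) by (cases x; cases y; cases z) auto
next
  fix x y z assume "x \<in> Sigma UNIV car" "y \<in> Sigma UNIV car" "z \<in> Sigma UNIV car"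
  then show "sum_le phi psi le (sum_mul phi mul x y) z = sum_le phi psi le y (sum_ld phi psi ld x z)"
    using residuation(2) by (cases x; cases y; cases z) auto
qed


abbreviation "AA \<equiv> Sigma UNIV car"
abbreviation "MM \<equiv> sum_mul phi mul"
abbreviation "LDD \<equiv> sum_ld phi psi ld"
abbreviation "RDD \<equiv> sum_rd phi psi rd"
abbreviation "LEE \<equiv> sum_le phi psi le"
abbreviation "II \<equiv> {(p, one p) | p. True}"

lemma pos_lift:
  assumes e: "e \<in> car p" and h: "le p (one p) e"
  shows "positive_el AA LEE MM (p, e)"
  unfolding positive_el_def
proof (intro ballI conjI)
  fix y assume "y \<in> AA"
  then obtain q b where y: "y = (q, b)" and b: "b \<in> car q" by auto
  define r where "r = sup p q"
  have o: "p \<le> r" "q \<le> r" by (simp_all add: r_def)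
  have qr: "sup q r = r" by (simp add: r_def sup_aci)
  have c: "phi q r b \<in> car r" "phi p r e \<in> car r" using o b e by (simp_all add: phi_into)
  have "le r (one r) (phi p r e)" using phi_mono[OF o(1) one_in e h] o(1) by (simp add: phi_one)
  then have k1: "le r (phi q r b) (mul r (phi p r e) (phi q r b))"
    using mono_l[OF one_in c(2) c(1)] c by (simp add: one_l)
  have "le r (mul r (phi q r b) (one r)) (mul r (phi q r b) (phi p r e))"
    using mono_r[OF one_in c(2) c(1)] \<open>le r (one r) (phi p r e)\<close> by simp
  then have k2: "le r (phi q r b) (mul r (phi q r b) (phi p r e))"
    using c by (simp add: one_r)
  show "LEE y (MM (p, e) y)"
    using k1 c unfolding y by (simp add: M_simp LE_simp r_def[symmetric] qr psi_id mul_in)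
  show "LEE y (MM y (p, e))"
    using k2 c unfolding y by (simp add: M_simp LE_simp sup_commute[of q p] r_def[symmetric] qr psi_id mul_in)
qed

lemma cpi: "cpi_el AA LEE MM (p, one p)"
  unfolding cpi_el_def
proof (intro conjI)
  show "(p, one p) \<in> AA" by (simp add: one_in)
  show "central_el AA MM (p, one p)"
    unfolding central_el_def by (auto simp: M_simp sup_commute phi_one one_l one_r phi_into)
  show "positive_el AA LEE MM (p, one p)" using pos_lift[OF one_in refl'[OF one_in]] .
  show "idempotent_el MM (p, one p)"
    unfolding idempotent_el_def by (simp add: M_simp phi_id one_in one_l)
qed

lemma MI: "MM (p, one p) (q, one q) = (sup p q, one (sup p q))"
  by (simp add: M_simp phi_one one_l one_in)

lemma u_is: "a \<in> car p \<Longrightarrow> is_u LEE MM II (p, a) (p, one p)"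
  unfolding is_u_def
proof (intro conjI ballI impI)
  assume a: "a \<in> car p"
  show "(p, one p) \<in> II" by auto
  show "MM (p, one p) (p, a) = (p, a)" using a by (simp add: M_simp phi_id one_in one_l)
  fix x assume "x \<in> II" "MM x (p, a) = (p, a)"
  then obtain q where x: "x = (q, one q)" and "sup q p = p" by (auto simp: M_simp)
  then have "q \<le> p" by (metis sup_ge1)
  then show "LEE x (p, one p)" unfolding x using \<open>sup q p = p\<close>
    by (simp add: LE_simp phi_one psi_id one_in refl')
qed

lemma u_el_eq: assumes a: "a \<in> car p" shows "u_el LEE MM II (p, a) = (p, one p)"
  unfolding u_el_def
proof (rule the_equality)
  show "is_u LEE MM II (p, a) (p, one p)" using u_is[OF a] .
  fix y assume y: "is_u LEE MM II (p, a) y"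
  then obtain q where yq: "y = (q, one q)" and m: "MM y (p, a) = (p, a)"
    and mx: "\<forall>x\<in>II. MM x (p, a) = (p, a) \<longrightarrow> LEE x y"
    unfolding is_u_def by auto
  have "sup q p = p" using m unfolding yq by (simp add: M_simp)
  then have "q \<le> p" by (metis sup_ge1)
  have l1: "LEE (p, one p) y" using mx u_is[OF a] unfolding is_u_def by auto
  have l2: "LEE y (p, one p)" unfolding yq using \<open>sup q p = p\<close> \<open>q \<le> p\<close>
    by (simp add: LE_simp phi_one psi_id one_in refl')
  show "y = (p, one p)" using LE_antisym[OF one_in one_in, of q p] l1 l2 unfolding yq by simp
qed

lemma steady: "steady_over AA LEE MM LDD RDD II"
  unfolding steady_over_def balanced_over_def cpi_set_def
proof (intro conjI ballI)
  show "II \<noteq> {}" by auto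
  show "\<And>p. p \<in> II \<Longrightarrow> cpi_el AA LEE MM p" using cpi by auto
  show "\<And>p q. p \<in> II \<Longrightarrow> q \<in> II \<Longrightarrow> MM p q \<in> II" using MI by auto
  show "\<And>a. a \<in> AA \<Longrightarrow> \<exists>p. is_u LEE MM II a p" using u_is by auto
  fix a b assume a: "a \<in> AA" and b: "b \<in> AA"
  obtain p x where ax: "a = (p, x)" "x \<in> car p" using a by auto
  obtain q y where bx: "b = (q, y)" "y \<in> car q" using b by auto
  have o: "p \<le> sup p q" "q \<le> sup p q" by simp_all
  have m: "mul (sup p q) (phi p (sup p q) x) (phi q (sup p q) y) \<in> car (sup p q)"
    using ax bx o by (simp add: mul_in phi_into)
  show "u_el LEE MM II (MM a b) = MM (u_el LEE MM II a) (u_el LEE MM II b)"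
    unfolding ax(1) bx(1) M_simp[of p x q y] u_el_eq[OF m] u_el_eq[OF ax(2)] u_el_eq[OF bx(2)] using o
    by (simp add: M_simp phi_one one_l one_in)
  have m2: "rd (sup p q) (psi p (sup p q) x) (phi q (sup p q) y) \<in> car (sup p q)"
    using ax bx o by (simp add: rd_in phi_into psi_into)
  have m3: "ld (sup q p) (phi q (sup q p) y) (psi p (sup q p) x) \<in> car (sup q p)"
    using ax bx o by (simp add: ld_in phi_into psi_into sup_commute)
  show "u_el LEE MM II (RDD a b) = MM (u_el LEE MM II a) (u_el LEE MM II b)"
    unfolding ax(1) bx(1) RD_simp[of p x q y] u_el_eq[OF m2] u_el_eq[OF ax(2)] u_el_eq[OF bx(2)] using o
    by (simp add: M_simp phi_one one_l one_in)
  show "u_el LEE MM II (LDD b a) = MM (u_el LEE MM II a) (u_el LEE MM II b)"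
    unfolding ax(1) bx(1) LD_simp[of q y p x] u_el_eq[OF m3] u_el_eq[OF ax(2)] u_el_eq[OF bx(2)] using o
    by (simp add: M_simp phi_one one_l one_in sup_commute)
qed

lemma balanced: "(\<forall>p. balanced_rs (car p) (le p) (mul p) (ld p) (rd p)) \<Longrightarrow> balanced_rs AA LEE MM LDD RDD"
  unfolding balanced_rs_def
proof (intro ballI conjI)
  assume B: "\<forall>p. \<forall>x\<in>car p. ld p x x = rd p x x \<and> positive_el (car p) (le p) (mul p) (ld p x x) \<and>
            positive_el (car p) (le p) (mul p) (rd p x x)"
  fix x assume "x \<in> AA"
  then obtain p a where x: "x = (p, a)" and a: "a \<in> car p" by auto
  have e1: "LDD x x = (p, ld p a a)" unfolding x using a by (simp add: LD_simp phi_id psi_id)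
  have e2: "RDD x x = (p, rd p a a)" unfolding x using a by (simp add: RD_simp phi_id psi_id)
  have eq: "ld p a a = rd p a a" and pos: "positive_el (car p) (le p) (mul p) (ld p a a)"
    using B a by auto
  have "le p (one p) (mul p (ld p a a) (one p))" using pos one_in unfolding positive_el_def by blast
  then have h: "le p (one p) (ld p a a)" using a by (simp add: one_r ld_in)
  show "LDD x x = RDD x x" using e1 e2 eq by simp
  show "positive_el AA LEE MM (LDD x x)" unfolding e1 using pos_lift h a by (simp add: ld_in)
  show "positive_el AA LEE MM (RDD x x)" unfolding e2 eq[symmetric] using pos_lift h a by (simp add: ld_in)
qed

lemma intclosed: "(\<forall>p. integrally_closed (car p) (ld p) (one p)) \<Longrightarrow> {x. cpi_el AA LEE MM x} = II"
proof
  assume IC: "\<forall>p. integrally_closed (car p) (ld p) (one p)"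
  show "{x. cpi_el AA LEE MM x} \<subseteq> II"
  proof
    fix x assume "x \<in> {x. cpi_el AA LEE MM x}"
    then have c: "cpi_el AA LEE MM x" by simp
    then obtain p a where x: "x = (p, a)" and a: "a \<in> car p" unfolding cpi_el_def by auto
    have "LEE (p, one p) (MM x (p, one p))" using c one_in unfolding cpi_el_def positive_el_def by auto
    then have l1: "le p (one p) a" unfolding x using a by (simp add: M_simp LE_simp phi_id psi_id one_in one_r)
    have "MM x x = x" using c unfolding cpi_el_def idempotent_el_def by auto
    then have "mul p a a = a" unfolding x using a by (simp add: M_simp phi_id)
    then have "le p (mul p a a) a" using a refl' by simp
    then have "le p a (ld p a a)" using res_l a by blast
    then have "le p a (one p)" using IC a unfolding integrally_closed_def by auto
    then have "a = one p" using l1 antisym' a one_in by blast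
    then show "x \<in> II" unfolding x by auto
  qed
  show "II \<subseteq> {x. cpi_el AA LEE MM x}" using cpi by auto
qed

lemma integral_sq: "(\<forall>p. integral (car p) (le p) (one p)) \<Longrightarrow> \<forall>x\<in>AA. LEE (MM x x) x"
proof
  assume IN: "\<forall>p. integral (car p) (le p) (one p)"
  fix x assume "x \<in> AA"
  then obtain p a where x: "x = (p, a)" and a: "a \<in> car p" by auto
  have "le p a (one p)" using IN a unfolding integral_def by auto
  then have "le p (mul p a a) (mul p a (one p))" using mono_r[OF a one_in a] by simp
  then show "LEE (MM x x) x" unfolding x using a by (simp add: M_simp LE_simp phi_id psi_id one_r mul_in)
qed

lemma glob: "(\<forall>p. b0 \<le> p) \<Longrightarrow> global_identity AA MM (b0, one b0)"
  unfolding global_identity_def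
proof (intro conjI ballI)
  assume h: "\<forall>p. b0 \<le> p"
  show "(b0, one b0) \<in> AA" by (simp add: one_in)
  fix x assume "x \<in> AA"
  then obtain p a where x: "x = (p, a)" and a: "a \<in> car p" by auto
  have "sup b0 p = p" "sup p b0 = p" using h by (simp_all add: sup_absorb1 sup_absorb2)
  then show "MM (b0, one b0) x = x" "MM x (b0, one b0) = x"
    unfolding x using a h by (simp_all add: M_simp phi_one phi_id one_l one_r)
qed

end


theorem theorem6p14:
  fixes car :: "'i::semilattice_sup \<Rightarrow> 'a set"
    and le :: "'i \<Rightarrow> 'a \<Rightarrow> 'a \<Rightarrow> bool"
    and mul ld rd :: "'i \<Rightarrow> 'a \<Rightarrow> 'a \<Rightarrow> 'a"
    and one :: "'i \<Rightarrow> 'a"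
    and phi psi :: "'i \<Rightarrow> 'i \<Rightarrow> 'a \<Rightarrow> 'a"
  defines "A \<equiv> Sigma UNIV car"
    and "M \<equiv> sum_mul phi mul"
    and "LD \<equiv> sum_ld phi psi ld"
    and "RD \<equiv> sum_rd phi psi rd"
    and "LE \<equiv> sum_le phi psi le"
    and "I' \<equiv> {(p, one p) | p. True}"
  assumes rm: "\<And>p. residuated_monoid (car p) (le p) (mul p) (ld p) (rd p) (one p)"
    and phi_into: "\<And>p q a. p \<le> q \<Longrightarrow> a \<in> car p \<Longrightarrow> phi p q a \<in> car q"
    and psi_into: "\<And>p q a. p \<le> q \<Longrightarrow> a \<in> car p \<Longrightarrow> psi p q a \<in> car q"
    and phi_mono: "\<And>p q a b. p \<le> q \<Longrightarrow> a \<in> car p \<Longrightarrow> b \<in> car p \<Longrightarrow> le p a b \<Longrightarrow>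
                     le q (phi p q a) (phi p q b)"
    and psi_mono: "\<And>p q a b. p \<le> q \<Longrightarrow> a \<in> car p \<Longrightarrow> b \<in> car p \<Longrightarrow> le p a b \<Longrightarrow>
                     le q (psi p q a) (psi p q b)"
    and phi_id: "\<And>p a. a \<in> car p \<Longrightarrow> phi p p a = a"
    and psi_id: "\<And>p a. a \<in> car p \<Longrightarrow> psi p p a = a"
    and phi_comp: "\<And>p q r a. p \<le> q \<Longrightarrow> q \<le> r \<Longrightarrow> a \<in> car p \<Longrightarrow>
                     phi q r (phi p q a) = phi p r a"
    and psi_comp: "\<And>p q r a. p \<le> q \<Longrightarrow> q \<le> r \<Longrightarrow> a \<in> car p \<Longrightarrow>
                     psi q r (psi p q a) = psi p r a"
    and phi_one: "\<And>p q. p \<le> q \<Longrightarrow> phi p q (one p) = one q"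
    and phi_mul: "\<And>p q a b. p \<le> q \<Longrightarrow> a \<in> car p \<Longrightarrow> b \<in> car p \<Longrightarrow>
                     phi p q (mul p a b) = mul q (phi p q a) (phi p q b)"
    and psi_ld: "\<And>p q a b. p \<le> q \<Longrightarrow> a \<in> car p \<Longrightarrow> b \<in> car p \<Longrightarrow>
                     psi p q (ld p a b) = ld q (phi p q a) (psi p q b)"
    and psi_rd: "\<And>p q a b. p \<le> q \<Longrightarrow> a \<in> car p \<Longrightarrow> b \<in> car p \<Longrightarrow>
                     psi p q (rd p a b) = rd q (psi p q a) (phi p q b)"
    and S1: "\<And>p q r t a. p < q \<Longrightarrow> p < r \<Longrightarrow> t = sup q r \<Longrightarrow> a \<in> car p \<Longrightarrow>
                     le t (phi q t (psi p q a)) (psi r t (phi p r a))"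
    and S2: "\<And>p q a b. p < q \<Longrightarrow> a \<in> car p \<Longrightarrow> b \<in> car p \<Longrightarrow>
                     le q (phi p q a) (psi p q b) \<Longrightarrow> le p a b \<and> a \<noteq> b"
  shows "residuated_semigroup A LE M LD RD
       \<and> (\<forall>bot. (\<forall>p. bot \<le> p) \<longrightarrow> global_identity A M (bot, one bot))
       \<and> (\<forall>p. cpi_el A LE M (p, one p))
       \<and> (\<forall>p q. M (p, one p) (q, one q) = (sup p q, one (sup p q)))
       \<and> (\<forall>x\<in>I'. \<forall>y\<in>I'. M x y \<in> I')
       \<and> bij_betw (\<lambda>p. (p, one p)) UNIV I'
       \<and> steady_over A LE M LD RD I'
       \<and> (\<forall>a\<in>A. u_el LE M I' a = (fst a, one (fst a)))
       \<and> ((\<forall>p. balanced_rs (car p) (le p) (mul p) (ld p) (rd p)) \<longrightarrow> balanced_rs A LE M LD RD)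
       \<and> ((\<forall>p. integrally_closed (car p) (ld p) (one p)) \<longrightarrow> {x. cpi_el A LE M x} = I')
       \<and> ((\<forall>p. integral (car p) (le p) (one p)) \<longrightarrow> (\<forall>x\<in>A. LE (M x x) x))"
proof -
  interpret ctx car le mul ld rd one phi psi
    apply unfold_locales
    apply (fact rm)
    apply (fact phi_into)
    apply (fact psi_into)
    apply (fact phi_mono)
    apply (fact psi_mono)
    apply (fact phi_id)
    apply (fact psi_id)
    apply (fact phi_comp)
    apply (fact psi_comp)
    apply (fact phi_one)
    apply (fact phi_mul)
    apply (fact psi_ld)
    apply (fact psi_rd)
    apply (fact S1)
    apply (fact S2)
    done
  note d = assms(1-6)
  show ?thesis
    unfolding d
    apply (intro conjI)
    subgoal by (rule RS)
    subgoal using glob by blast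
    subgoal using cpi by blast
    subgoal using MI by blast
    subgoal using MI by auto
    subgoal unfolding bij_betw_def inj_on_def by auto
    subgoal by (rule steady)
    subgoal using u_el_eq by auto
    subgoal using balanced by blast
    subgoal using intclosed by blast
    subgoal using integral_sq by blast
    done
qed

end
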